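(* Let $\mathbf{A}$ be a finite idempotent algebra, $B$ a subuniverse of $\mathbf{A}$, and $C,D\subseteq A$. Then $(C,D)$ is a $B$-blocker of $\mathbf{A}$ if and only if: (1) $D$ is a subuniverse of $\mathbf{A}$; (2) $\emptyset\neq C\subseteq D$; (3) $C\cap B=\emptyset$; (4) $D\cap B\neq\emptyset$; and (5') for each basic operation $t$ of $\mathbf{A}$, of arity $s$ say, there is an index $i\in\{1,\dots,s\}$ such that $t(d_1,\dots,d_s)\in C$ whenever $d_j\in D$ for all $j$ and $d_i\in C$.
   Context: $B$-blocker: a pair $(C,D)$ of subsets of $A$ such that (1) $D$ is a subuniverse of $\mathbf{A}$; (2) $\emptyset\neq C\subseteq D$; (3) $C\cap B=\emptyset$; (4) $D\cap B\neq\emptyset$; (5) for every $n\ge 1$, $D^n\setminus (D\setminus C)^n$ is a subuniverse of $\mathbf{A}^n$. An algebra is idempotent if every basic operation $f$ satisfies $f(x,\dots,x)\approx x$. *)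

theory Defs
  imports Main
begin

definition algebra :: "'a set \<Rightarrow> 'f set \<Rightarrow> ('f \<Rightarrow> nat) \<Rightarrow> ('f \<Rightarrow> 'a list \<Rightarrow> 'a) \<Rightarrow> bool" where
  "algebra A F ar op \<longleftrightarrow>
     (\<forall>f\<in>F. \<forall>xs. length xs = ar f \<and> set xs \<subseteq> A \<longrightarrow> op f xs \<in> A)"

definition idempotent :: "'a set \<Rightarrow> 'f set \<Rightarrow> ('f \<Rightarrow> nat) \<Rightarrow> ('f \<Rightarrow> 'a list \<Rightarrow> 'a) \<Rightarrow> bool" where
  "idempotent A F ar op \<longleftrightarrow> (\<forall>f\<in>F. \<forall>x\<in>A. op f (replicate (ar f) x) = x)"

definition subuniverse :: "'a set \<Rightarrow> 'f set \<Rightarrow> ('f \<Rightarrow> nat) \<Rightarrow> ('f \<Rightarrow> 'a list \<Rightarrow> 'a) \<Rightarrow> 'a set \<Rightarrow> bool" where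
  "subuniverse A F ar op S \<longleftrightarrow> S \<subseteq> A \<and>
     (\<forall>f\<in>F. \<forall>xs. length xs = ar f \<and> set xs \<subseteq> S \<longrightarrow> op f xs \<in> S)"

definition tuples :: "nat \<Rightarrow> 'a set \<Rightarrow> 'a list set" where
  "tuples n X = {xs. length xs = n \<and> set xs \<subseteq> X}"

definition power_op :: "nat \<Rightarrow> ('f \<Rightarrow> 'a list \<Rightarrow> 'a) \<Rightarrow> 'f \<Rightarrow> 'a list list \<Rightarrow> 'a list" where
  "power_op n op f xss = map (\<lambda>k. op f (map (\<lambda>xs. xs ! k) xss)) [0..<n]"

definition blocker :: "'a set \<Rightarrow> 'f set \<Rightarrow> ('f \<Rightarrow> nat) \<Rightarrow> ('f \<Rightarrow> 'a list \<Rightarrow> 'a)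
    \<Rightarrow> 'a set \<Rightarrow> 'a set \<Rightarrow> 'a set \<Rightarrow> bool" where
  "blocker A F ar op B C D \<longleftrightarrow>
     subuniverse A F ar op D \<and> C \<noteq> {} \<and> C \<subseteq> D \<and> C \<inter> B = {} \<and> D \<inter> B \<noteq> {} \<and>
     (\<forall>n\<ge>1. subuniverse (tuples n A) F ar (power_op n op) (tuples n D - tuples n (D - C)))"

end

theory Submission
  imports Defs
begin

lemma map_nth_self: "length xs = s \<Longrightarrow> map (\<lambda>j. xs ! j) [0..<s] = xs"
  by (metis map_nth)

theorem lemma4p6:
  fixes A :: "'a set" and F :: "'f set" and ar :: "'f \<Rightarrow> nat"
    and op :: "'f \<Rightarrow> 'a list \<Rightarrow> 'a" and B C D :: "'a set"
  assumes "algebra A F ar op" and "finite A" and "idempotent A F ar op"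
    and "subuniverse A F ar op B" and "C \<subseteq> A" and "D \<subseteq> A"
  shows "blocker A F ar op B C D \<longleftrightarrow>
     (subuniverse A F ar op D \<and> C \<noteq> {} \<and> C \<subseteq> D \<and> C \<inter> B = {} \<and> D \<inter> B \<noteq> {} \<and>
      (\<forall>f\<in>F. \<exists>i<ar f. \<forall>ds. length ds = ar f \<and> set ds \<subseteq> D \<and> ds ! i \<in> C \<longrightarrow> op f ds \<in> C))"
proof
  assume bl: "blocker A F ar op B C D"
  hence D: "subuniverse A F ar op D" and C0: "C \<noteq> {}" "C \<subseteq> D" "C \<inter> B = {}" "D \<inter> B \<noteq> {}"
    and P: "\<And>n. n \<ge> 1 \<Longrightarrow> subuniverse (tuples n A) F ar (power_op n op) (tuples n D - tuples n (D - C))"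
    by (auto simp: blocker_def)
  have "\<exists>i<ar f. \<forall>ds. length ds = ar f \<and> set ds \<subseteq> D \<and> ds ! i \<in> C \<longrightarrow> op f ds \<in> C"
    if f: "f \<in> F" for f
  proof (cases "ar f = 0")
    case True
    have "power_op 1 op f [] \<in> tuples 1 D - tuples 1 (D - C)"
      using P[of 1] f True unfolding subuniverse_def by auto
    hence "op f [] \<in> C" by (auto simp: power_op_def tuples_def)
    obtain c b where c: "c \<in> C" and b: "b \<in> D" "b \<in> B" using C0 by blast
    have "op f [] = c" using assms(3) f True c C0(2) assms(6) unfolding idempotent_def
      by (metis replicate_0 subsetD)
    moreover have "op f [] = b" using assms(3) f True b assms(6) unfolding idempotent_def
      by (metis replicate_0 subsetD)
    ultimately show ?thesis using c b C0(3) by auto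
  next
    case False
    define s where "s = ar f"
    show ?thesis
    proof (rule ccontr)
      assume "\<not> ?thesis"
      hence "\<forall>i<s. \<exists>ds. length ds = s \<and> set ds \<subseteq> D \<and> ds ! i \<in> C \<and> op f ds \<notin> C"
        unfolding s_def by blast
      then obtain g where g: "\<And>i. i < s \<Longrightarrow> length (g i) = s \<and> set (g i) \<subseteq> D \<and> g i ! i \<in> C \<and> op f (g i) \<notin> C"
        by metis
      define xss where "xss = map (\<lambda>j. map (\<lambda>k. g k ! j) [0..<s]) [0..<s]"
      have col: "map (\<lambda>xs. xs ! k) xss = g k" if "k < s" for k
        using g[OF that] that unfolding xss_def by (simp add: map_nth_self[of "g k" s] cong: map_cong)
      have po: "power_op s op f xss = map (\<lambda>k. op f (g k)) [0..<s]"
        unfolding power_op_def using col by simp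
      have xin: "set xss \<subseteq> tuples s D - tuples s (D - C)"
      proof
        fix x assume "x \<in> set xss"
        then obtain j where j: "j < s" and x: "x = map (\<lambda>k. g k ! j) [0..<s]"
          unfolding xss_def by auto
        have "x \<in> tuples s D" using g j unfolding x tuples_def
          by (auto, metis nth_mem subsetD)
        moreover have "x ! j \<in> C" using g[OF j] j unfolding x by simp
        hence "x \<notin> tuples s (D - C)" using j unfolding tuples_def x
          by auto (metis Diff_iff atLeastLessThan_iff image_subset_iff zero_le)
        ultimately show "x \<in> tuples s D - tuples s (D - C)" by blast
      qed
      have "length xss = ar f" unfolding xss_def s_def by simp
      hence "power_op s op f xss \<in> tuples s D - tuples s (D - C)"
        using P[of s] False f xin unfolding subuniverse_def s_def by auto
      hence "\<not> set (map (\<lambda>k. op f (g k)) [0..<s]) \<subseteq> D - C"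
        unfolding po tuples_def by auto
      then obtain k where k: "k < s" "op f (g k) \<in> C \<or> op f (g k) \<notin> D"
        by (simp add: subset_iff) (metis atLeastLessThan_iff)
      have "op f (g k) \<in> D" using D f g[OF k(1)] unfolding subuniverse_def s_def by auto
      thus False using k g[OF k(1)] by auto
    qed
  qed
  thus "subuniverse A F ar op D \<and> C \<noteq> {} \<and> C \<subseteq> D \<and> C \<inter> B = {} \<and> D \<inter> B \<noteq> {} \<and>
      (\<forall>f\<in>F. \<exists>i<ar f. \<forall>ds. length ds = ar f \<and> set ds \<subseteq> D \<and> ds ! i \<in> C \<longrightarrow> op f ds \<in> C)"
    using D C0 by blast
next
  assume R: "subuniverse A F ar op D \<and> C \<noteq> {} \<and> C \<subseteq> D \<and> C \<inter> B = {} \<and> D \<inter> B \<noteq> {} \<and>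
      (\<forall>f\<in>F. \<exists>i<ar f. \<forall>ds. length ds = ar f \<and> set ds \<subseteq> D \<and> ds ! i \<in> C \<longrightarrow> op f ds \<in> C)"
  hence D: "subuniverse A F ar op D" by blast
  have "subuniverse (tuples n A) F ar (power_op n op) (tuples n D - tuples n (D - C))" for n
    unfolding subuniverse_def
  proof (intro conjI ballI allI impI)
    show "tuples n D - tuples n (D - C) \<subseteq> tuples n A" using assms(6) by (auto simp: tuples_def)
  next
    fix f xss assume f: "f \<in> F" and xs: "length xss = ar f \<and> set xss \<subseteq> tuples n D - tuples n (D - C)"
    obtain i where i: "i < ar f" and iC: "\<forall>ds. length ds = ar f \<and> set ds \<subseteq> D \<and> ds ! i \<in> C \<longrightarrow> op f ds \<in> C"
      using R f by blast
    have xi: "xss ! i \<in> tuples n D - tuples n (D - C)" using xs i by (metis nth_mem subsetD)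
    then obtain k where k: "k < n" "xss ! i ! k \<in> C"
      unfolding tuples_def by (auto simp: in_set_conv_nth)
    have colD: "set (map (\<lambda>xs. xs ! k') xss) \<subseteq> D" if "k' < n" for k'
    proof
      fix y assume "y \<in> set (map (\<lambda>xs. xs ! k') xss)"
      then obtain x where "x \<in> set xss" "y = x ! k'" by auto
      hence "x \<in> tuples n D" using xs by auto
      thus "y \<in> D" using \<open>y = x ! k'\<close> that unfolding tuples_def by auto
    qed
    have inD: "power_op n op f xss \<in> tuples n D"
      using D f xs colD unfolding tuples_def power_op_def subuniverse_def by auto
    have "op f (map (\<lambda>xs. xs ! k) xss) \<in> C"
      using iC colD[OF k(1)] xs i k(2) by auto
    hence "power_op n op f xss ! k \<in> C" using k(1) by (simp add: power_op_def)
    hence "power_op n op f xss \<notin> tuples n (D - C)" using k(1)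
      unfolding tuples_def by (auto simp: power_op_def) (metis Diff_iff atLeastLessThan_iff image_subset_iff zero_le)
    thus "power_op n op f xss \<in> tuples n D - tuples n (D - C)" using inD by blast
  qed
  thus "blocker A F ar op B C D" using R by (simp add: blocker_def)
qed

end
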